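(* Let $\lambda>0$ and consider the Yule (pure-birth) tree with speciation rate $\lambda$ started from an initial bifurcation. For $n\ge 2$, let $P_n$ (respectively $I_n$) be the expected sum of the lengths of the pendant (respectively interior) edges of the tree at the moment just before the $(n+1)$-st leaf appears, i.e. the tree with $n$ leaves observed at the end of the period during which it has exactly $n$ leaves. Set $p_n=P_n/n$ and $i_n=I_n/(n-2)$. Then for all $n\ge 3$, $$i_n=p_n=\frac{1}{2\lambda}.$$ (In particular $P_n=\frac{n}{2\lambda}$ for all $n\ge 2$.) *)

theory Defs
  imports "HOL-Probability.Probability"
begin

text \<open>Probability space driving the Yule tree with speciation rate l, started from
  an initial bifurcation at time 0.  Coordinate k (k \<ge> 2) carries a pair:
  the holding time of the period with exactly k leaves, exponential with rate k*l,
  and the index (uniform on 0..k-1) of the leaf that splits at the end of that period.\<close>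
definition yule_space :: "real \<Rightarrow> (nat \<Rightarrow> real \<times> nat) measure" where
  "yule_space l = PiM {2..} (\<lambda>k. density lborel (exponential_density (real k * l))
                                   \<Otimes>\<^sub>M measure_pmf (pmf_of_set {..<k}))"

text \<open>yule_tree w m = (t, L, I): the tree with m+2 leaves, observed at time t, the end
  of the period during which it has exactly m+2 leaves.  L lists the birth times of
  the current leaves (start times of pendant edges), I lists the lengths of the
  interior edges.  When leaf j splits at time t, its pendant edge (born at L!j)
  becomes an interior edge of length t - L!j and two new leaves born at t appear.\<close>
primrec yule_tree :: "(nat \<Rightarrow> real \<times> nat) \<Rightarrow> nat \<Rightarrow> real \<times> real list \<times> real list" where
  "yule_tree w 0 = (fst (w 2), [0, 0], [])"
| "yule_tree w (Suc m) =
     (case yule_tree w m of (t, L, I) \<Rightarrow>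
        let j = snd (w (m + 2))
        in (t + fst (w (m + 3)), take j L @ drop (Suc j) L @ [t, t], I @ [t - L ! j]))"

definition pendant_length :: "real \<times> real list \<times> real list \<Rightarrow> real" where
  "pendant_length s = (case s of (t, L, I) \<Rightarrow> sum_list (map (\<lambda>b. t - b) L))"

definition interior_length :: "real \<times> real list \<times> real list \<Rightarrow> real" where
  "interior_length s = (case s of (t, L, I) \<Rightarrow> sum_list I)"

definition yule_P :: "real \<Rightarrow> nat \<Rightarrow> real" where
  "yule_P l n = (\<integral>w. pendant_length (yule_tree w (n - 2)) \<partial>yule_space l)"

definition yule_I :: "real \<Rightarrow> nat \<Rightarrow> real" where
  "yule_I l n = (\<integral>w. interior_length (yule_tree w (n - 2)) \<partial>yule_space l)"

end

theory Submission
  imports Defs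
begin


definition tt :: "nat \<Rightarrow> (nat \<Rightarrow> real \<times> nat) \<Rightarrow> real" where
  "tt m w = fst (yule_tree w m)"
definition LL :: "nat \<Rightarrow> (nat \<Rightarrow> real \<times> nat) \<Rightarrow> real list" where
  "LL m w = fst (snd (yule_tree w m))"
definition DD :: "nat \<Rightarrow> (nat \<Rightarrow> real \<times> nat) \<Rightarrow> real" where
  "DD m w = (\<Sum>k\<in>{2..<m+2}. fst (w k))"
definition good :: "(nat \<Rightarrow> real \<times> nat) \<Rightarrow> bool" where
  "good w \<longleftrightarrow> (\<forall>k\<ge>2. 0 \<le> fst (w k) \<and> snd (w k) < k)"

lemma yule_tree_Suc': "yule_tree w (Suc m) =
   (tt m w + fst (w (m+3)), take (snd (w (m+2))) (LL m w) @ drop (Suc (snd (w (m+2)))) (LL m w) @ [tt m w, tt m w],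
    snd (snd (yule_tree w m)) @ [tt m w - LL m w ! snd (w (m+2))])"
  by (simp add: tt_def LL_def Let_def split: prod.split)

lemma tt_0: "tt 0 w = fst (w 2)" by (simp add: tt_def)
lemma LL_0: "LL 0 w = [0,0]" by (simp add: LL_def)
lemma tt_Suc: "tt (Suc m) w = tt m w + fst (w (m+3))"
  by (simp add: tt_def Let_def split: prod.split)
lemma LL_Suc: "LL (Suc m) w = take (snd (w (m+2))) (LL m w) @ drop (Suc (snd (w (m+2)))) (LL m w) @ [tt m w, tt m w]"
  by (subst LL_def, subst yule_tree_Suc') simp

lemma tt_closed: "tt m w = (\<Sum>k\<in>{2..m+2}. fst (w k))"
proof (induction m)
  case 0 then show ?case by (simp add: tt_0 numeral_2_eq_2)
next
  case (Suc m)
  have "{2..Suc m + 2} = insert (m+3) {2..m+2}" by auto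
  then show ?case using Suc by (simp add: tt_Suc)
qed

lemma tt_DD: "tt m w = DD m w + fst (w (m+2))"
proof -
  have "{2..m+2} = insert (m+2) {2..<m+2}" by auto
  then show ?thesis by (simp add: tt_closed DD_def)
qed

lemma tree_dep: "(\<forall>k\<in>{2..m+2}. w k = w' k) \<Longrightarrow> yule_tree w m = yule_tree w' m"
proof (induction m)
  case 0 then show ?case by simp
next
  case (Suc m)
  then have "yule_tree w m = yule_tree w' m" by auto
  moreover have "w (m+2) = w' (m+2)" "w (m+3) = w' (m+3)" using Suc.prems by auto
  ultimately show ?case by (simp add: Let_def split: prod.split)
qed

lemma LL_dep: "(\<forall>k\<in>{2..<m+2}. w k = w' k) \<Longrightarrow> LL m w = LL m w'"
proof (cases m)
  case 0 then show ?thesis by (simp add: LL_0)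
next
  case (Suc n)
  assume a: "\<forall>k\<in>{2..<m+2}. w k = w' k"
  then have "yule_tree w n = yule_tree w' n" using Suc by (intro tree_dep) auto
  then have "LL n w = LL n w'" "tt n w = tt n w'" by (simp_all add: LL_def tt_def)
  moreover have "w (n+2) = w' (n+2)" using a Suc by auto
  ultimately show ?thesis using Suc by (simp add: LL_Suc)
qed

lemma DD_mono: "good w \<Longrightarrow> DD m w \<le> DD (Suc m) w"
  unfolding DD_def good_def
  by (intro sum_mono2) auto

lemma DD_nonneg: "good w \<Longrightarrow> 0 \<le> DD m w"
  unfolding DD_def good_def by (intro sum_nonneg) auto

lemma LL_inv: "good w \<Longrightarrow> length (LL m w) = m + 2 \<and> (\<forall>x\<in>set (LL m w). 0 \<le> x \<and> x \<le> DD m w)"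
proof (induction m)
  case 0 then show ?case by (simp add: LL_0 DD_def)
next
  case (Suc m)
  define j where "j = snd (w (m+2))"
  have j: "j < m + 2" using Suc.prems unfolding good_def j_def by auto
  have t: "tt m w = DD (Suc m) w"
  proof -
    have "{2..<Suc m + 2} = insert (m+2) {2..<m+2}" by auto
    then show ?thesis by (simp add: tt_DD DD_def)
  qed
  have "length (LL (Suc m) w) = m + 3" using Suc j by (simp add: LL_Suc j_def)
  moreover have "\<forall>x\<in>set (LL (Suc m) w). 0 \<le> x \<and> x \<le> DD (Suc m) w"
  proof
    fix x assume "x \<in> set (LL (Suc m) w)"
    then have "x \<in> set (LL m w) \<or> x = tt m w"
      unfolding LL_Suc by (auto dest: in_set_takeD in_set_dropD)
    then show "0 \<le> x \<and> x \<le> DD (Suc m) w"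
      using Suc DD_mono[OF Suc.prems, of m] DD_nonneg[OF Suc.prems, of "Suc m"] t by auto
  qed
  ultimately show ?case by simp
qed

lemma sum_list_minus_const: "sum_list (map (\<lambda>b. t - b) L) = real (length L) * t - sum_list L"
  by (induction L) (auto simp: algebra_simps)

lemma pendant_eq: "pendant_length (yule_tree w m) = real (length (LL m w)) * tt m w - sum_list (LL m w)"
  unfolding pendant_length_def tt_def LL_def
  by (simp split: prod.split add: sum_list_minus_const)

lemma pendant_eq_good: "good w \<Longrightarrow> pendant_length (yule_tree w m) = real (m+2) * tt m w - (\<Sum>i<m+2. LL m w ! i)"
  using LL_inv[of w m] by (simp add: pendant_eq sum_list_sum_nth atLeast0LessThan)

lemma interior_Suc: "interior_length (yule_tree w (Suc m)) = interior_length (yule_tree w m) + (tt m w - LL m w ! snd (w (m+2)))"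
  unfolding interior_length_def by (subst yule_tree_Suc') (simp split: prod.split)

lemma interior_0: "interior_length (yule_tree w 0) = 0"
  by (simp add: interior_length_def)

lemma pendant_Suc: assumes "good w"
  shows "pendant_length (yule_tree w (Suc m)) = pendant_length (yule_tree w m) - (tt m w - LL m w ! snd (w (m+2))) + real (m+3) * fst (w (m+3))"
proof -
  define j where "j = snd (w (m+2))"
  define L where "L = LL m w"
  have j: "j < length L" using assms LL_inv[OF assms, of m] unfolding good_def j_def L_def by auto
  have s: "sum_list (take j L) + sum_list (drop (Suc j) L) = sum_list L - L ! j"
  proof -
    have "sum_list (take j L @ L!j # drop (Suc j) L) = sum_list L"
      by (simp only: id_take_nth_drop[OF j, symmetric])
    then show ?thesis by simp
  qed
  have e: "LL (Suc m) w = take j L @ drop (Suc j) L @ [tt m w, tt m w]" by (simp add: LL_Suc j_def L_def)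
  have e2: "LL m w ! snd (w (m+2)) = L ! j" "LL m w = L" by (simp_all add: j_def L_def)
  have lenL: "length L = m + 2" using LL_inv[OF assms, of m] by (simp add: L_def)
  show ?thesis
    unfolding pendant_eq e e2 tt_Suc
    using s j lenL by (simp add: algebra_simps j_def)
qed

lemma split_j: assumes "good w"
  shows "tt m w - LL m w ! snd (w (m+2)) = fst (w (m+2)) +
     (\<Sum>i<m+2. (if snd (w (m+2)) = i then 1 else 0) * (DD m w - LL m w ! i))"
proof -
  have j: "snd (w (m+2)) < m+2" using assms unfolding good_def by auto
  have "(\<Sum>i<m+2. (if snd (w (m+2)) = i then 1 else 0) * (DD m w - LL m w ! i)) = DD m w - LL m w ! snd (w (m+2))"
  proof -
    have "(\<Sum>i<m+2. (if snd (w (m+2)) = i then 1 else 0) * (DD m w - LL m w ! i)) =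
        (\<Sum>i<m+2. if snd (w (m+2)) = i then (DD m w - LL m w ! i) else 0)"
      by (rule sum.cong) auto
    also have "\<dots> = DD m w - LL m w ! snd (w (m+2))"
      using j by (subst sum.delta') auto
    finally show ?thesis .
  qed
  then show ?thesis by (simp add: tt_DD)
qed



lemma nth_two: "[a, a] ! c = (if c < 2 then a else [] ! (c - 2))"
  by (cases c; cases "c - 1") (auto simp: numeral_2_eq_2)

lemma nth_step: assumes "length L = n"
  shows "(take j L @ drop (Suc j) L @ [t, t]) ! i =
   (if i < min j n then L ! i else if i - min j n < n - Suc j then L ! (Suc j + (i - min j n))
    else (if i - min j n - (n - Suc j) < 2 then t else [] ! (i - min j n - (n - Suc j) - 2)))"
  using assms by (auto simp: nth_append nth_two min_def)

lemma len_step: "length (take j L @ drop (Suc j) L @ [t, t]) = min j (length L) + (length L - Suc j) + 2"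
  by simp

locale coordm =
  fixes N :: "(nat \<Rightarrow> real \<times> nat) measure"
  assumes fm: "\<And>k. (\<lambda>w. fst (w k)) \<in> borel_measurable N"
    and sm: "\<And>k. (\<lambda>w. snd (w k)) \<in> measurable N (count_space UNIV)"
begin

lemma tt_meas: "tt m \<in> borel_measurable N"
  unfolding tt_closed[abs_def] using fm by measurable

lemma DD_meas: "DD m \<in> borel_measurable N"
  unfolding DD_def[abs_def] using fm by measurable

lemma if_const_meas: "f \<in> borel_measurable N \<Longrightarrow> g \<in> borel_measurable N \<Longrightarrow> (\<lambda>w. if c then f w else g w) \<in> borel_measurable N"
  by (cases c) simp_all

lemma nat_fun_meas: "g \<in> measurable N (count_space UNIV) \<Longrightarrow> (\<lambda>w. (h :: nat \<Rightarrow> nat) (g w)) \<in> measurable N (count_space UNIV)"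
  by (erule measurable_compose) simp

lemma LL_meas: "(\<lambda>w. length (LL m w)) \<in> measurable N (count_space UNIV) \<and> (\<forall>i. (\<lambda>w. LL m w ! i) \<in> borel_measurable N)"
proof (induction m)
  case 0
  show ?case by (simp add: LL_0)
next
  case (Suc m)
  have len: "(\<lambda>w. length (LL (Suc m) w)) \<in> measurable N (count_space UNIV)"
  proof -
    have a: "(\<lambda>w. min a (length (LL m w)) + (length (LL m w) - Suc a) + 2) \<in> measurable N (count_space UNIV)" for a
      by (rule nat_fun_meas[where h="\<lambda>n. min a n + (n - Suc a) + 2"]) (use Suc in auto)
    show ?thesis unfolding LL_Suc len_step
      by (rule measurable_compose_countable[where f="\<lambda>a w. min a (length (LL m w)) + (length (LL m w) - Suc a) + 2" and g="\<lambda>w. snd (w (m+2))"])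
        (use a sm in auto)
  qed
  have nth: "(\<lambda>w. LL (Suc m) w ! i) \<in> borel_measurable N" for i
  proof -
    define F where "F a n w = (if i < min a n then LL m w ! i else if i - min a n < n - Suc a then LL m w ! (Suc a + (i - min a n))
      else (if i - min a n - (n - Suc a) < 2 then tt m w else [] ! (i - min a n - (n - Suc a) - 2)))" for a n w
    have e: "LL (Suc m) w ! i = F (snd (w (m+2))) (length (LL m w)) w" for w
      unfolding LL_Suc F_def by (rule nth_step) simp
    have Fm: "F a n \<in> borel_measurable N" for a n
      unfolding F_def by (intro if_const_meas measurable_const) (use Suc tt_meas[of m] in auto)
    show ?thesis unfolding e
      apply (rule measurable_compose_countable[where f="\<lambda>a w. F a (length (LL m w)) w" and g="\<lambda>w. snd (w (m+2))"])
       apply (rule measurable_compose_countable[where f="\<lambda>n w. F _ n w" and g="\<lambda>w. length (LL m w)"])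
      using Fm Suc sm by auto
  qed
  show ?case using len nth by auto
qed

lemma LL_nth_meas: "(\<lambda>w. LL m w ! i) \<in> borel_measurable N"
  using LL_meas by auto

lemma LL_j_meas: "(\<lambda>w. LL m w ! snd (w k)) \<in> borel_measurable N"
  by (rule measurable_compose_countable[where f="\<lambda>a w. LL m w ! a"]) (auto simp: LL_nth_meas sm)

lemma pendant_meas: "(\<lambda>w. pendant_length (yule_tree w m)) \<in> borel_measurable N"
proof -
  have e: "pendant_length (yule_tree w m) = (\<lambda>n w. real n * tt m w - (\<Sum>i<n. LL m w ! i)) (length (LL m w)) w" for w
    by (simp add: pendant_eq sum_list_sum_nth atLeast0LessThan)
  show ?thesis unfolding e
    apply (rule measurable_compose_countable)
    using LL_meas tt_meas LL_nth_meas by auto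
qed

lemma interior_meas: "(\<lambda>w. interior_length (yule_tree w m)) \<in> borel_measurable N"
proof (induction m)
  case 0 then show ?case by (simp add: interior_length_def)
next
  case (Suc m)
  show ?case unfolding interior_Suc using Suc tt_meas LL_j_meas by measurable
qed

lemma ind_meas: "(\<lambda>w. indicator (UNIV \<times> {i}) (w k) :: real) \<in> borel_measurable N"
proof -
  have eq: "(\<lambda>w. indicator (UNIV \<times> {i}) (w k) :: real) = (\<lambda>w. if snd (w k) = i then 1 else 0)"
    by (auto simp: indicator_def fun_eq_iff mem_Times_iff)
  show ?thesis unfolding eq
    by (rule measurable_compose_countable[where f="\<lambda>a w. if a = i then 1 else 0"]; auto simp: sm)
qed

end



definition Mk :: "real \<Rightarrow> nat \<Rightarrow> (real \<times> nat) measure" where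
  "Mk l k = density lborel (exponential_density (real (max k 2) * l)) \<Otimes>\<^sub>M measure_pmf (pmf_of_set {..<max k 2})"

lemma yule_space_eq: "yule_space l = PiM {2..} (Mk l)"
  unfolding yule_space_def Mk_def by (intro PiM_cong) (auto simp: max_def)

lemma prob_Mk: "l > 0 \<Longrightarrow> prob_space (Mk l k)"
  unfolding Mk_def
  apply (rule prob_space_pair)
   apply (rule prob_space_exponential_density) apply simp
  apply (rule prob_space_measure_pmf)
  done

lemma sets_Mk: "sets (Mk l k) = sets (borel \<Otimes>\<^sub>M count_space UNIV)"
  unfolding Mk_def
  by (intro sets_pair_measure_cong) (auto simp: sets_measure_pmf_count_space)

lemma space_Mk: "space (Mk l k) = UNIV"
  unfolding Mk_def by (simp add: space_pair_measure)

lemma coordm_PiM: "coordm (PiM J (Mk l))"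
proof
  have wk: "(\<lambda>w. w k) \<in> measurable (PiM J (Mk l)) (borel \<Otimes>\<^sub>M count_space UNIV)" for k
  proof (cases "k \<in> J")
    case True
    then have "(\<lambda>w. w k) \<in> measurable (PiM J (Mk l)) (Mk l k)" by (rule measurable_component_singleton)
    then show ?thesis by (subst measurable_cong_sets[OF refl sets_Mk[symmetric]])
  next
    case False
    have "(\<lambda>w. undefined) \<in> measurable (PiM J (Mk l)) (borel \<Otimes>\<^sub>M count_space UNIV)"
      by (rule measurable_const) (simp add: space_pair_measure)
    then show ?thesis by (rule measurable_cong[THEN iffD1, rotated]) (use False in \<open>auto simp: space_PiM\<close>)
  qed
  fix k
  show "(\<lambda>w. fst (w k)) \<in> borel_measurable (PiM J (Mk l))" using wk[of k] by measurable
  show "(\<lambda>w. snd (w k)) \<in> measurable (PiM J (Mk l)) (count_space UNIV)" using wk[of k] by measurable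
qed

locale yule =
  fixes l :: real
  assumes l_pos: "0 < l"
begin

abbreviation "Y \<equiv> PiM {2..} (Mk l)"

sublocale P: product_prob_space "Mk l" "{2..}"
  by (simp add: product_prob_space_def product_prob_space_axioms_def product_sigma_finite_def
      prob_Mk[OF l_pos] prob_space_imp_sigma_finite)

sublocale YC: coordm Y by (rule coordm_PiM)

lemma wk_meas: "(\<lambda>w. w k) \<in> measurable Y (Mk l k)"
proof (cases "k \<in> {2..}")
  case True then show ?thesis by (rule measurable_component_singleton)
next
  case False
  have "(\<lambda>w. undefined) \<in> measurable Y (Mk l k)" by (simp add: space_Mk)
  then show ?thesis by (rule measurable_cong[THEN iffD1, rotated]) (use False in \<open>auto simp: space_PiM\<close>)
qed

lemma indep: "P.indep_vars (Mk l) (\<lambda>k w. w k) {2..}"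
proof -
  have "distr Y (PiM {2..} (Mk l)) (\<lambda>x. \<lambda>i\<in>{2..}. x i) = distr Y Y (\<lambda>x. x)"
    by (rule distr_cong) (auto simp: space_PiM)
  also have "\<dots> = Y" by simp
  also have "\<dots> = PiM {2..} (\<lambda>i. distr Y (Mk l i) (\<lambda>w. w i))"
    by (intro PiM_cong refl P.PiM_component[symmetric]) auto
  finally show ?thesis
    by (subst P.indep_vars_iff_distr_eq_PiM) (auto intro: wk_meas)
qed

lemma indep_int:
  fixes G :: "(nat \<Rightarrow> real \<times> nat) \<Rightarrow> real" and h :: "real \<times> nat \<Rightarrow> real"
  assumes k: "2 \<le> k"
    and Gm: "G \<in> borel_measurable (PiM {2..<k} (Mk l))"
    and Gd: "\<And>w. G (restrict w {2..<k}) = G w"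
    and Gi: "integrable Y G"
    and hm: "h \<in> borel_measurable (borel \<Otimes>\<^sub>M count_space UNIV)"
    and hi: "integrable Y (\<lambda>w. h (w k))"
  shows "integrable Y (\<lambda>w. h (w k) * G w)"
    "(\<integral>w. h (w k) * G w \<partial>Y) = (\<integral>w. h (w k) \<partial>Y) * (\<integral>w. G w \<partial>Y)"
proof -
  have iv: "P.indep_var (PiM {2..<k} (Mk l)) (\<lambda>w. restrict (\<lambda>i. w i) {2..<k}) (PiM {k} (Mk l)) (\<lambda>w. restrict (\<lambda>i. w i) {k})"
    by (rule P.indep_var_restrict[OF indep]) (use k in auto)
  have hm': "(\<lambda>v. h (v k)) \<in> borel_measurable (PiM {k} (Mk l))"
  proof -
    have "(\<lambda>v. v k) \<in> measurable (PiM {k} (Mk l)) (Mk l k)" by (rule measurable_component_singleton) simp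
    then have "(\<lambda>v. v k) \<in> measurable (PiM {k} (Mk l)) (borel \<Otimes>\<^sub>M count_space UNIV)"
      by (subst measurable_cong_sets[OF refl sets_Mk[symmetric]])
    then show ?thesis using hm by (rule measurable_compose)
  qed
  have iv2: "P.indep_var borel (G \<circ> (\<lambda>w. restrict (\<lambda>i. w i) {2..<k})) borel ((\<lambda>v. h (v k)) \<circ> (\<lambda>w. restrict (\<lambda>i. w i) {k}))"
    by (rule P.indep_var_compose[OF iv Gm hm'])
  have e1: "(G \<circ> (\<lambda>w. restrict (\<lambda>i. w i) {2..<k})) = G" using Gd by (auto simp: fun_eq_iff)
  have e2: "((\<lambda>v. h (v k)) \<circ> (\<lambda>w. restrict (\<lambda>i. w i) {k})) = (\<lambda>w. h (w k))" by (auto simp: fun_eq_iff)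
  have iv3: "P.indep_var borel G borel (\<lambda>w. h (w k))" using iv2 unfolding e1 e2 .
  show "integrable Y (\<lambda>w. h (w k) * G w)"
    using P.indep_var_integrable[OF iv3 Gi hi] by (simp add: mult.commute)
  show "(\<integral>w. h (w k) * G w \<partial>Y) = (\<integral>w. h (w k) \<partial>Y) * (\<integral>w. G w \<partial>Y)"
    using P.indep_var_lebesgue_integral[OF iv3 Gi hi] by (simp add: mult.commute)
qed

lemma int_coord:
  fixes h :: "real \<times> nat \<Rightarrow> real"
  assumes k: "2 \<le> k" and hm: "h \<in> borel_measurable (borel \<Otimes>\<^sub>M count_space UNIV)"
  shows "integrable Y (\<lambda>w. h (w k)) \<longleftrightarrow> integrable (Mk l k) h"
    "(\<integral>w. h (w k) \<partial>Y) = (\<integral>x. h x \<partial>Mk l k)"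
proof -
  have d: "distr Y (Mk l k) (\<lambda>w. w k) = Mk l k" using k by (intro P.PiM_component) auto
  have hm': "h \<in> borel_measurable (Mk l k)" using hm by (simp add: measurable_cong_sets[OF sets_Mk refl])
  show "integrable Y (\<lambda>w. h (w k)) \<longleftrightarrow> integrable (Mk l k) h"
    using integrable_distr_eq[OF wk_meas[of k] hm'] d by simp
  show "(\<integral>w. h (w k) \<partial>Y) = (\<integral>x. h x \<partial>Mk l k)"
    using integral_distr[OF wk_meas[of k] hm'] d by simp
qed

lemma fst_exp:
  assumes k: "2 \<le> k"
  shows "integrable Y (\<lambda>w. fst (w k))" "(\<integral>w. fst (w k) \<partial>Y) = 1 / (real k * l)"
proof -
  define r where "r = real k * l"
  have r: "0 < r" using k l_pos by (simp add: r_def)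
  have mk: "Mk l k = density lborel (exponential_density r) \<Otimes>\<^sub>M measure_pmf (pmf_of_set {..<k})"
    using k by (simp add: Mk_def r_def max_def)
  have "distr (Mk l k) lborel fst = distr (Mk l k) (density lborel (exponential_density r)) fst"
    by (rule distr_cong) auto
  also have "\<dots> = density lborel (exponential_density r)"
    unfolding mk by (rule measure_pmf.distr_pair_fst)
  finally have dd: "distributed (Mk l k) lborel fst (exponential_density r)"
    unfolding distributed_def by (simp add: measurable_cong_sets[OF sets_Mk refl])
  interpret MK: prob_space "Mk l k" by (rule prob_Mk[OF l_pos])
  have i1: "integrable (Mk l k) fst" using prob_space.erlang_ith_moment_integrable[OF prob_Mk[OF l_pos] r dd, of 1] by simp
  have i2: "(\<integral>x. fst x \<partial>Mk l k) = 1 / r" using prob_space.erlang_ith_moment[OF prob_Mk[OF l_pos] r dd, of 1] by simp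
  show "integrable Y (\<lambda>w. fst (w k))" using int_coord(1)[OF k, of fst] i1 by simp
  show "(\<integral>w. fst (w k) \<partial>Y) = 1 / (real k * l)" using int_coord(2)[OF k, of fst] i2 by (simp add: r_def)
qed

lemma ind_exp:
  assumes k: "2 \<le> k" and i: "i < k"
  shows "integrable Y (\<lambda>w. indicator (UNIV \<times> {i}) (w k) :: real)"
    "(\<integral>w. indicator (UNIV \<times> {i}) (w k) \<partial>Y) = 1 / real k"
proof -
  have mk: "Mk l k = density lborel (exponential_density (real k * l)) \<Otimes>\<^sub>M measure_pmf (pmf_of_set {..<k})"
    using k by (simp add: Mk_def max_def)
  interpret E: prob_space "density lborel (exponential_density (real k * l))"
    by (rule prob_space_exponential_density) (use k l_pos in simp)
  have hm: "(indicator (UNIV \<times> {i}) :: _ \<Rightarrow> real) \<in> borel_measurable (borel \<Otimes>\<^sub>M count_space UNIV)"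
    by (intro borel_measurable_indicator) auto
  have em: "emeasure (Mk l k) (UNIV \<times> {i}) = ennreal (1 / real k)"
    unfolding mk using i k
    by (subst measure_pmf.emeasure_pair_measure_Times) (auto simp: E.emeasure_space_1[simplified] emeasure_pmf_single pmf_of_set[of "{..<k}"] lessThan_empty_iff)
  have s: "UNIV \<times> {i} \<in> sets (Mk l k)" by (simp add: sets_Mk)
  have "integrable (Mk l k) (indicator (UNIV \<times> {i}) :: _ \<Rightarrow> real)"
    using s em by (intro integrable_real_indicator) auto
  then show "integrable Y (\<lambda>w. indicator (UNIV \<times> {i}) (w k) :: real)" using int_coord(1)[OF k hm] by simp
  have "(\<integral>x. indicator (UNIV \<times> {i}) x \<partial>Mk l k) = 1 / real k"
    using em by (simp add: space_Mk measure_def)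
  then show "(\<integral>w. indicator (UNIV \<times> {i}) (w k) \<partial>Y) = 1 / real k" using int_coord(2)[OF k hm] by simp
qed

lemma AE_good: "AE w in Y. good w"
proof -
  have "AE w in Y. 0 \<le> fst (w k) \<and> snd (w k) < k" if k: "2 \<le> k" for k
  proof (rule P.AE_component)
    show "k \<in> {2..}" using k by simp
    have mk: "Mk l k = density lborel (exponential_density (real k * l)) \<Otimes>\<^sub>M measure_pmf (pmf_of_set {..<k})"
      using k by (simp add: Mk_def max_def)
    interpret E: prob_space "density lborel (exponential_density (real k * l))"
      by (rule prob_space_exponential_density) (use k l_pos in simp)
    interpret PP: pair_sigma_finite "density lborel (exponential_density (real k * l))" "measure_pmf (pmf_of_set {..<k})"
      by unfold_locales
    show "AE x in Mk l k. 0 \<le> fst x \<and> snd x < k"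
      unfolding mk
    proof (rule PP.AE_pair_measure)
      show "{x \<in> space (density lborel (exponential_density (real k * l)) \<Otimes>\<^sub>M measure_pmf (pmf_of_set {..<k})).
              0 \<le> fst x \<and> snd x < k} \<in> sets (density lborel (exponential_density (real k * l)) \<Otimes>\<^sub>M measure_pmf (pmf_of_set {..<k}))"
        by measurable
      show "AE x in density lborel (exponential_density (real k * l)). AE y in measure_pmf (pmf_of_set {..<k}). 0 \<le> fst (x, y) \<and> snd (x, y) < k"
      proof (subst AE_density)
        show "(\<lambda>x. ennreal (exponential_density (real k * l) x)) \<in> borel_measurable lborel" by simp
        show "AE x in lborel. 0 < ennreal (exponential_density (real k * l) x) \<longrightarrow> (AE y in measure_pmf (pmf_of_set {..<k}). 0 \<le> fst (x, y) \<and> snd (x, y) < k)"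
          apply (rule AE_I2) apply (rule impI) apply (rule AE_pmfI)
          using k by (auto simp: exponential_density_def set_pmf_of_set[of "{..<k}"] lessThan_empty_iff split: if_splits)
      qed
    qed
  qed
  then have "\<forall>k. AE w in Y. 2 \<le> k \<longrightarrow> 0 \<le> fst (w k) \<and> snd (w k) < k"
    by (auto intro: AE_I2)
  then have "AE w in Y. \<forall>k. 2 \<le> k \<longrightarrow> 0 \<le> fst (w k) \<and> snd (w k) < k"
    by (subst AE_all_countable)
  then show ?thesis by (simp add: good_def)
qed

end



lemma arith1: "0 < l \<Longrightarrow> 0 < (a::real) \<Longrightarrow> b = a - 2 \<Longrightarrow> 1/(a*l) + (b/(2*l))/a = 1/(2*l)"
  by (simp add: field_simps)
lemma arith2: "0 < l \<Longrightarrow> 0 < (a::real) \<Longrightarrow> a/(2*l) - 1/(2*l) + 1/l = (a+1)/(2*l)"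
  by (simp add: field_simps)

context yule
begin

lemma DD_int: "integrable Y (DD m)"
  unfolding DD_def[abs_def] by (intro Bochner_Integration.integrable_sum fst_exp) auto

lemma G_int: assumes "i < m + 2" shows "integrable Y (\<lambda>w. DD m w - LL m w ! i)"
proof (rule Bochner_Integration.integrable_bound[OF DD_int])
  show "(\<lambda>w. DD m w - LL m w ! i) \<in> borel_measurable Y"
    using YC.DD_meas YC.LL_nth_meas by measurable
  show "AE w in Y. norm (DD m w - LL m w ! i) \<le> norm (DD m w)"
    using AE_good
  proof eventually_elim
    case (elim w)
    have "LL m w ! i \<in> set (LL m w)" using LL_inv[OF elim, of m] assms by simp
    then show ?case using LL_inv[OF elim, of m] by auto
  qed
qed

definition Q :: "nat \<Rightarrow> (nat \<Rightarrow> real \<times> nat) \<Rightarrow> real" where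
  "Q m w = (\<Sum>i<m+2. DD m w - LL m w ! i)"

lemma Q_int: "integrable Y (Q m)"
  unfolding Q_def[abs_def] by (intro Bochner_Integration.integrable_sum G_int) auto

lemma Q_meas: "Q m \<in> borel_measurable Y"
  unfolding Q_def[abs_def] using YC.DD_meas YC.LL_nth_meas by measurable

lemma indG:
  assumes i: "i < m + 2"
  shows "integrable Y (\<lambda>w. indicator (UNIV \<times> {i}) (w (m+2)) * (DD m w - LL m w ! i))"
    "(\<integral>w. indicator (UNIV \<times> {i}) (w (m+2)) * (DD m w - LL m w ! i) \<partial>Y) = (\<integral>w. DD m w - LL m w ! i \<partial>Y) / real (m+2)"
proof -
  interpret C2: coordm "PiM {2..<m+2} (Mk l)" by (rule coordm_PiM)
  have Gm: "(\<lambda>w. DD m w - LL m w ! i) \<in> borel_measurable (PiM {2..<m+2} (Mk l))"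
    using C2.DD_meas C2.LL_nth_meas by measurable
  have Gd: "DD m (restrict w {2..<m+2}) - LL m (restrict w {2..<m+2}) ! i = DD m w - LL m w ! i" for w
  proof -
    have "DD m (restrict w {2..<m+2}) = DD m w" unfolding DD_def by (intro sum.cong) auto
    moreover have "LL m (restrict w {2..<m+2}) = LL m w" by (rule LL_dep) auto
    ultimately show ?thesis by simp
  qed
  have hm: "(indicator (UNIV \<times> {i}) :: _ \<Rightarrow> real) \<in> borel_measurable (borel \<Otimes>\<^sub>M count_space UNIV)"
    by (intro borel_measurable_indicator) auto
  note r = indep_int[where G="\<lambda>w. DD m w - LL m w ! i" and h="indicator (UNIV \<times> {i})" and k="m+2",
      OF _ Gm Gd G_int[OF i] hm ind_exp(1)[OF _ i]]
  show "integrable Y (\<lambda>w. indicator (UNIV \<times> {i}) (w (m+2)) * (DD m w - LL m w ! i))"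
    using r(1) by simp
  show "(\<integral>w. indicator (UNIV \<times> {i}) (w (m+2)) * (DD m w - LL m w ! i) \<partial>Y) = (\<integral>w. DD m w - LL m w ! i \<partial>Y) / real (m+2)"
    using r(2) ind_exp(2)[OF _ i] by simp
qed

definition J :: "nat \<Rightarrow> (nat \<Rightarrow> real \<times> nat) \<Rightarrow> real" where
  "J m w = tt m w - LL m w ! snd (w (m+2))"

lemma J_meas: "J m \<in> borel_measurable Y"
  unfolding J_def[abs_def] using YC.tt_meas YC.LL_j_meas by measurable

lemma J_int: "integrable Y (J m)" "(\<integral>w. J m w \<partial>Y) = 1 / (real (m+2) * l) + (\<integral>w. Q m w \<partial>Y) / real (m+2)"
proof -
  define R where "R w = fst (w (m+2)) + (\<Sum>i<m+2. indicator (UNIV \<times> {i}) (w (m+2)) * (DD m w - LL m w ! i))" for w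
  have ae: "AE w in Y. J m w = R w"
    using AE_good
  proof eventually_elim
    case (elim w)
    have e: "indicator (UNIV \<times> {i}) (w (m+2)) = (if snd (w (m+2)) = i then 1 else 0 :: real)" for i
      by (auto simp: indicator_def mem_Times_iff)
    show ?case unfolding J_def R_def e by (rule split_j[OF elim])
  qed
  have Rm: "R \<in> borel_measurable Y"
    unfolding R_def[abs_def] using YC.DD_meas YC.LL_nth_meas YC.fm YC.ind_meas by measurable
  have Ri: "integrable Y R"
    unfolding R_def[abs_def] by (intro Bochner_Integration.integrable_add Bochner_Integration.integrable_sum fst_exp indG) auto
  show "integrable Y (J m)" using integrable_cong_AE[OF J_meas Rm ae] Ri by simp
  have "(\<integral>w. J m w \<partial>Y) = (\<integral>w. R w \<partial>Y)" by (rule integral_cong_AE[OF J_meas Rm ae])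
  also have "\<dots> = 1 / (real (m+2) * l) + (\<Sum>i<m+2. (\<integral>w. DD m w - LL m w ! i \<partial>Y) / real (m+2))"
  proof -
    have i1: "integrable Y (\<lambda>w. fst (w (m+2)))" by (rule fst_exp) simp
    have i2: "integrable Y (\<lambda>w. \<Sum>i<m+2. indicator (UNIV \<times> {i}) (w (m+2)) * (DD m w - LL m w ! i))"
      by (rule Bochner_Integration.integrable_sum) (rule indG(1), simp)
    have "(\<integral>w. R w \<partial>Y) = (\<integral>w. fst (w (m+2)) \<partial>Y) + (\<integral>w. (\<Sum>i<m+2. indicator (UNIV \<times> {i}) (w (m+2)) * (DD m w - LL m w ! i)) \<partial>Y)"
      unfolding R_def by (rule Bochner_Integration.integral_add[OF i1 i2])
    also have "(\<integral>w. (\<Sum>i<m+2. indicator (UNIV \<times> {i}) (w (m+2)) * (DD m w - LL m w ! i)) \<partial>Y) =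
        (\<Sum>i<m+2. (\<integral>w. indicator (UNIV \<times> {i}) (w (m+2)) * (DD m w - LL m w ! i) \<partial>Y))"
      by (rule Bochner_Integration.integral_sum) (rule indG(1), simp)
    also have "\<dots> = (\<Sum>i<m+2. (\<integral>w. DD m w - LL m w ! i \<partial>Y) / real (m+2))"
      by (intro sum.cong refl) (rule indG(2), simp)
    also have "(\<integral>w. fst (w (m+2)) \<partial>Y) = 1 / (real (m+2) * l)" by (rule fst_exp) simp
    finally show ?thesis .
  qed
  also have "(\<Sum>i<m+2. (\<integral>w. DD m w - LL m w ! i \<partial>Y) / real (m+2)) = (\<integral>w. Q m w \<partial>Y) / real (m+2)"
  proof -
    have "(\<integral>w. Q m w \<partial>Y) = (\<Sum>i<m+2. (\<integral>w. DD m w - LL m w ! i \<partial>Y))"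
      unfolding Q_def by (rule Bochner_Integration.integral_sum) (rule G_int, simp)
    then show ?thesis by (simp only: sum_divide_distrib)
  qed
  finally show "(\<integral>w. J m w \<partial>Y) = 1 / (real (m+2) * l) + (\<integral>w. Q m w \<partial>Y) / real (m+2)" .
qed

lemma pend_Q: "integrable Y (\<lambda>w. pendant_length (yule_tree w m))"
   "(\<integral>w. pendant_length (yule_tree w m) \<partial>Y) = (\<integral>w. Q m w \<partial>Y) + 1 / l"
proof -
  define R where "R w = Q m w + real (m+2) * fst (w (m+2))" for w
  have ae: "AE w in Y. pendant_length (yule_tree w m) = R w"
    using AE_good
  proof eventually_elim
    case (elim w)
    show ?case unfolding pendant_eq_good[OF elim] R_def Q_def tt_DD
      by (simp add: sum_subtractf algebra_simps)
  qed
  have Rm: "R \<in> borel_measurable Y"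
    unfolding R_def[abs_def] using Q_meas YC.fm by measurable
  have Ri: "integrable Y R"
    unfolding R_def[abs_def] by (intro Bochner_Integration.integrable_add integrable_mult_right Q_int fst_exp) auto
  show "integrable Y (\<lambda>w. pendant_length (yule_tree w m))" using integrable_cong_AE[OF YC.pendant_meas Rm ae] Ri by simp
  have "(\<integral>w. pendant_length (yule_tree w m) \<partial>Y) = (\<integral>w. R w \<partial>Y)" by (rule integral_cong_AE[OF YC.pendant_meas Rm ae])
  also have "\<dots> = (\<integral>w. Q m w \<partial>Y) + 1 / l"
    unfolding R_def using l_pos
    by (subst Bochner_Integration.integral_add) (auto intro!: Q_int fst_exp simp: fst_exp)
  finally show "(\<integral>w. pendant_length (yule_tree w m) \<partial>Y) = (\<integral>w. Q m w \<partial>Y) + 1 / l" .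
qed

lemma main:
  "integrable Y (\<lambda>w. pendant_length (yule_tree w m)) \<and> (\<integral>w. pendant_length (yule_tree w m) \<partial>Y) = real (m+2) / (2*l) \<and>
   integrable Y (\<lambda>w. interior_length (yule_tree w m)) \<and> (\<integral>w. interior_length (yule_tree w m) \<partial>Y) = real m / (2*l)"
proof (induction m)
  case 0
  have "(\<integral>w. pendant_length (yule_tree w 0) \<partial>Y) = (\<integral>w. 2 * fst (w 2) \<partial>Y)"
    by (simp add: pendant_length_def)
  also have "\<dots> = 1 / l" using fst_exp(2)[of 2] l_pos by simp
  finally show ?case using pend_Q(1)[of 0] l_pos by (simp add: interior_length_def)
next
  case (Suc m)
  have jv: "(\<integral>w. J m w \<partial>Y) = 1 / (2 * l)"
  proof -
    have "(\<integral>w. Q m w \<partial>Y) = real (m+2) / (2*l) - 1 / l" using Suc pend_Q(2)[of m] by simp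
    also have "\<dots> = real m / (2*l)" using l_pos by (simp add: field_simps)
    finally have q: "(\<integral>w. Q m w \<partial>Y) = real m / (2*l)" .
    show ?thesis unfolding J_int(2) q by (rule arith1) (use l_pos in auto)
  qed
  define R where "R w = pendant_length (yule_tree w m) - J m w + real (m+3) * fst (w (m+3))" for w
  have ae: "AE w in Y. pendant_length (yule_tree w (Suc m)) = R w"
    using AE_good
  proof eventually_elim
    case (elim w)
    show ?case unfolding R_def J_def by (rule pendant_Suc[OF elim])
  qed
  have Rm: "R \<in> borel_measurable Y"
    unfolding R_def[abs_def] using YC.pendant_meas J_meas YC.fm by measurable
  have "(\<integral>w. pendant_length (yule_tree w (Suc m)) \<partial>Y) = (\<integral>w. R w \<partial>Y)" by (rule integral_cong_AE[OF YC.pendant_meas Rm ae])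
  also have "\<dots> = real (m+2) / (2*l) - 1 / (2 * l) + 1 / l"
  proof -
    have i1: "integrable Y (\<lambda>w. pendant_length (yule_tree w m))" using Suc by simp
    have i3: "integrable Y (\<lambda>w. fst (w (m+3)))" by (rule fst_exp) simp
    have "(\<integral>w. R w \<partial>Y) = (\<integral>w. pendant_length (yule_tree w m) - J m w \<partial>Y) + (\<integral>w. real (m+3) * fst (w (m+3)) \<partial>Y)"
      unfolding R_def by (rule Bochner_Integration.integral_add) (auto intro: i1 i3 J_int(1) Bochner_Integration.integrable_diff)
    also have "(\<integral>w. pendant_length (yule_tree w m) - J m w \<partial>Y) = (\<integral>w. pendant_length (yule_tree w m) \<partial>Y) - (\<integral>w. J m w \<partial>Y)"
      by (rule Bochner_Integration.integral_diff[OF i1 J_int(1)])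
    also have "(\<integral>w. real (m+3) * fst (w (m+3)) \<partial>Y) = real (m+3) * (1 / (real (m+3) * l))"
      using fst_exp(2)[of "m+3"] by simp
    also have "real (m+3) * (1 / (real (m+3) * l)) = 1 / l" by simp
    finally show ?thesis using Suc jv by simp
  qed
  also have "\<dots> = real (Suc m + 2) / (2 * l)" using arith2[OF l_pos, of "real (m+2)"] by simp
  finally have p: "(\<integral>w. pendant_length (yule_tree w (Suc m)) \<partial>Y) = real (Suc m + 2) / (2 * l)" .
  have ie: "interior_length (yule_tree w (Suc m)) = interior_length (yule_tree w m) + J m w" for w
    unfolding J_def by (rule interior_Suc)
  have ii: "integrable Y (\<lambda>w. interior_length (yule_tree w (Suc m)))"
    unfolding ie using Suc J_int(1) by auto
  have "(\<integral>w. interior_length (yule_tree w (Suc m)) \<partial>Y) = real m / (2*l) + 1 / (2 * l)"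
    unfolding ie using Suc J_int(1) jv by (subst Bochner_Integration.integral_add) auto
  also have "\<dots> = real (Suc m) / (2 * l)" using l_pos by (simp add: field_simps)
  finally have iv: "(\<integral>w. interior_length (yule_tree w (Suc m)) \<partial>Y) = real (Suc m) / (2 * l)" .
  show ?case using p ii iv pend_Q(1)[of "Suc m"] by blast
qed

end


theorem theorem1:
  fixes l :: real
  assumes "l > 0"
  shows "(\<forall>n\<ge>3. yule_I l n / real (n - 2) = 1 / (2 * l) \<and> yule_P l n / real n = 1 / (2 * l))
         \<and> (\<forall>n\<ge>2. yule_P l n = real n / (2 * l))"
proof -
  interpret yule l using assms by unfold_locales
  have P: "yule_P l n = real n / (2 * l)" if n: "n \<ge> 2" for n
  proof -
    have "real (n - 2 + 2) = real n" using n by simp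
    then show ?thesis unfolding yule_P_def yule_space_eq using main[of "n - 2"] by simp
  qed
  have I: "yule_I l n = real (n - 2) / (2 * l)" if n: "n \<ge> 2" for n
    unfolding yule_I_def yule_space_eq using main[of "n - 2"] by simp
  have A: "yule_I l n / real (n - 2) = 1 / (2 * l) \<and> yule_P l n / real n = 1 / (2 * l)" if n: "n \<ge> 3" for n
  proof -
    have a: "real (n - 2) > 0" "real n > 0" using n by auto
    show ?thesis using P[of n] I[of n] n a by simp
  qed
  show ?thesis using A P by auto
qed

end
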